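(* Let $G$ be a graph and let $v\in V(G)$. Then $v$ is Z-irrelevant (i.e., $v$ is not contained in any minimal zero forcing set of $G$) if and only if $v$ is not contained in any minimal fort of $G$.
   Context: Graphs are simple, finite, undirected, with nonempty vertex set; $N(v)$ denotes the open neighborhood of $v$. Zero forcing: starting from an initial set $B$ of blue vertices (all others white), repeatedly apply the color change rule: a blue vertex $u$ changes a white vertex $w$ to blue if $w$ is the only white neighbor of $u$. $B$ is a zero forcing set if eventually all vertices become blue. A minimal zero forcing set is a zero forcing set no proper subset of which is a zero forcing set. A nonempty set $F\subseteq V(G)$ is a fort if for every $v\in V(G)\setminus F$, $|N(v)\cap F|\neq 1$. A minimal fort is a fort that properly contains no other fort. *)

theory Defs
  imports Main
begin

definition simple_graph :: "'a set \<Rightarrow> ('a \<Rightarrow> 'a \<Rightarrow> bool) \<Rightarrow> bool" where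
  "simple_graph V E \<longleftrightarrow> finite V \<and> V \<noteq> {} \<and>
     (\<forall>u w. E u w \<longrightarrow> u \<in> V \<and> w \<in> V) \<and>
     (\<forall>u w. E u w \<longrightarrow> E w u) \<and> (\<forall>u. \<not> E u u)"

definition nbhd :: "'a set \<Rightarrow> ('a \<Rightarrow> 'a \<Rightarrow> bool) \<Rightarrow> 'a \<Rightarrow> 'a set" where
  "nbhd V E v = {u \<in> V. E v u}"

text \<open>One application of the colour change rule: S is the current blue set,
a blue vertex u whose only white neighbour is w turns w blue.\<close>
definition zf_step :: "'a set \<Rightarrow> ('a \<Rightarrow> 'a \<Rightarrow> bool) \<Rightarrow> 'a set \<Rightarrow> 'a set \<Rightarrow> bool" where
  "zf_step V E S S' \<longleftrightarrow> (\<exists>u w. u \<in> S \<and> w \<in> V - S \<and> nbhd V E u - S = {w} \<and> S' = insert w S)"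

definition zero_forcing_set :: "'a set \<Rightarrow> ('a \<Rightarrow> 'a \<Rightarrow> bool) \<Rightarrow> 'a set \<Rightarrow> bool" where
  "zero_forcing_set V E B \<longleftrightarrow> B \<subseteq> V \<and> (zf_step V E)\<^sup>*\<^sup>* B V"

definition minimal_zero_forcing_set :: "'a set \<Rightarrow> ('a \<Rightarrow> 'a \<Rightarrow> bool) \<Rightarrow> 'a set \<Rightarrow> bool" where
  "minimal_zero_forcing_set V E B \<longleftrightarrow> zero_forcing_set V E B \<and>
     (\<forall>B'. B' \<subset> B \<longrightarrow> \<not> zero_forcing_set V E B')"

definition fort :: "'a set \<Rightarrow> ('a \<Rightarrow> 'a \<Rightarrow> bool) \<Rightarrow> 'a set \<Rightarrow> bool" where
  "fort V E F \<longleftrightarrow> F \<noteq> {} \<and> F \<subseteq> V \<and> (\<forall>v \<in> V - F. card (nbhd V E v \<inter> F) \<noteq> 1)"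

definition minimal_fort :: "'a set \<Rightarrow> ('a \<Rightarrow> 'a \<Rightarrow> bool) \<Rightarrow> 'a set \<Rightarrow> bool" where
  "minimal_fort V E F \<longleftrightarrow> fort V E F \<and> (\<forall>F'. F' \<subset> F \<longrightarrow> \<not> fort V E F')"

definition Z_irrelevant :: "'a set \<Rightarrow> ('a \<Rightarrow> 'a \<Rightarrow> bool) \<Rightarrow> 'a \<Rightarrow> bool" where
  "Z_irrelevant V E v \<longleftrightarrow> \<not> (\<exists>B. minimal_zero_forcing_set V E B \<and> v \<in> B)"

end

theory Submission
  imports Defs
begin

lemma zfs_hits_fort:
  assumes z: "zero_forcing_set V E B" and f: "fort V E F"
  shows "F \<inter> B \<noteq> {}"
proof
  assume d: "F \<inter> B = {}"
  have inv: "S \<inter> F = {} \<and> S \<subseteq> V" if "(zf_step V E)\<^sup>*\<^sup>* B S" for S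
    using that
  proof (induction rule: rtranclp_induct)
    case base then show ?case using d z unfolding zero_forcing_set_def by blast
  next
    case (step S S')
    then obtain u w where u: "u \<in> S" "w \<in> V - S" "nbhd V E u - S = {w}" "S' = insert w S"
      unfolding zf_step_def by blast
    have "w \<notin> F"
    proof
      assume wF: "w \<in> F"
      have "nbhd V E u \<inter> F = {w}" using u step.IH wF by blast
      moreover have "u \<in> V - F" using u step.IH by blast
      ultimately have "card (nbhd V E u \<inter> F) = 1 \<and> u \<in> V - F" by simp
      then show False using f unfolding fort_def by blast
    qed
    then show ?case using u step.IH by blast
  qed
  have "V \<inter> F = {} \<and> V \<subseteq> V" using inv z unfolding zero_forcing_set_def by blast
  then show False using f unfolding fort_def by blast
qed

lemma hits_fort_zfs:
  assumes g: "simple_graph V E" and BV: "B \<subseteq> V" and h: "\<forall>F. fort V E F \<longrightarrow> F \<inter> B \<noteq> {}"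
  shows "zero_forcing_set V E B"
proof -
  let ?R = "{S. (zf_step V E)\<^sup>*\<^sup>* B S \<and> B \<subseteq> S \<and> S \<subseteq> V}"
  have inv: "B \<subseteq> S \<and> S \<subseteq> V" if "(zf_step V E)\<^sup>*\<^sup>* B S" for S
    using that
  proof (induction rule: rtranclp_induct)
    case base then show ?case using BV by blast
  next
    case (step S S') then show ?case unfolding zf_step_def by blast
  qed
  have fin: "finite ?R"
    by (rule finite_subset[of _ "Pow V"]) (use g in \<open>auto simp: simple_graph_def\<close>)
  have ne: "B \<in> ?R" using BV by blast
  obtain S where S: "S \<in> ?R" and mx: "\<forall>b\<in>?R. S \<le> b \<longrightarrow> S = b"
    using finite_has_maximal[OF fin] ne by blast
  have "S = V"
  proof (rule ccontr)
    assume "S \<noteq> V"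
    hence ne2: "V - S \<noteq> {}" using S by blast
    have "fort V E (V - S)"
      unfolding fort_def
    proof (intro conjI ballI)
      fix x assume x: "x \<in> V - (V - S)"
      show "card (nbhd V E x \<inter> (V - S)) \<noteq> 1"
      proof
        assume "card (nbhd V E x \<inter> (V - S)) = 1"
        then obtain w where w: "nbhd V E x \<inter> (V - S) = {w}" by (auto simp: card_Suc_eq)
        have "nbhd V E x - S = {w}" using w unfolding nbhd_def by blast
        moreover have "x \<in> S" "w \<in> V - S" using x w by auto
        ultimately have "zf_step V E S (insert w S)" unfolding zf_step_def by blast
        hence "insert w S \<in> ?R" using S \<open>w \<in> V - S\<close> by auto
        with mx have "S = insert w S" by blast
        with \<open>w \<in> V - S\<close> show False by blast
      qed
    qed (use ne2 in auto)
    with h S show False by blast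
  qed
  then show ?thesis using S BV unfolding zero_forcing_set_def by blast
qed

lemma zfs_iff:
  assumes g: "simple_graph V E"
  shows "zero_forcing_set V E B \<longleftrightarrow> B \<subseteq> V \<and> (\<forall>F. fort V E F \<longrightarrow> F \<inter> B \<noteq> {})"
  using zfs_hits_fort hits_fort_zfs[OF g] unfolding zero_forcing_set_def by blast

lemma fort_has_minimal:
  assumes g: "simple_graph V E" and f: "fort V E F"
  shows "\<exists>F'. F' \<subseteq> F \<and> minimal_fort V E F'"
proof -
  let ?R = "{F'. fort V E F' \<and> F' \<subseteq> F}"
  have fin: "finite ?R"
    by (rule finite_subset[of _ "Pow V"]) (use g in \<open>auto simp: simple_graph_def fort_def\<close>)
  obtain M where M: "M \<in> ?R" and mn: "\<forall>b\<in>?R. b \<le> M \<longrightarrow> M = b"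
    using finite_has_minimal[OF fin] f by blast
  have "minimal_fort V E M" unfolding minimal_fort_def
    using M mn by blast
  then show ?thesis using M by blast
qed

lemma zfs_has_minimal:
  assumes g: "simple_graph V E" and f: "zero_forcing_set V E T"
  shows "\<exists>T'. T' \<subseteq> T \<and> minimal_zero_forcing_set V E T'"
proof -
  let ?R = "{F'. zero_forcing_set V E F' \<and> F' \<subseteq> T}"
  have fin: "finite ?R"
    by (rule finite_subset[of _ "Pow V"]) (use g in \<open>auto simp: simple_graph_def zero_forcing_set_def\<close>)
  obtain M where M: "M \<in> ?R" and mn: "\<forall>b\<in>?R. b \<le> M \<longrightarrow> M = b"
    using finite_has_minimal[OF fin] f by blast
  have "minimal_zero_forcing_set V E M" unfolding minimal_zero_forcing_set_def
    using M mn by blast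
  then show ?thesis using M by blast
qed

theorem proposition1p6:
  fixes V :: "'a set" and E :: "'a \<Rightarrow> 'a \<Rightarrow> bool" and v :: 'a
  assumes "simple_graph V E" and "v \<in> V"
  shows "Z_irrelevant V E v \<longleftrightarrow> \<not> (\<exists>F. minimal_fort V E F \<and> v \<in> F)"
proof
  assume zi: "Z_irrelevant V E v"
  show "\<not> (\<exists>F. minimal_fort V E F \<and> v \<in> F)"
  proof
    assume "\<exists>F. minimal_fort V E F \<and> v \<in> F"
    then obtain F where F: "minimal_fort V E F" "v \<in> F" by blast
    let ?T = "(V - F) \<union> {v}"
    have "zero_forcing_set V E ?T"
      unfolding zfs_iff[OF assms(1)]
    proof (intro conjI allI impI)
      show "?T \<subseteq> V" using assms by blast
      fix F' assume f': "fort V E F'"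
      show "F' \<inter> ?T \<noteq> {}"
      proof (cases "F' \<subseteq> F")
        case True
        have "\<not> F' \<subset> F" using F(1) f' unfolding minimal_fort_def by blast
        hence "F' = F" using True by blast
        then show ?thesis using F by blast
      next
        case False then show ?thesis using f' unfolding fort_def by blast
      qed
    qed
    then obtain T' where T': "T' \<subseteq> ?T" "minimal_zero_forcing_set V E T'"
      using zfs_has_minimal[OF assms(1)] by blast
    have "F \<inter> T' \<noteq> {}"
      by (rule zfs_hits_fort) (use T' F in \<open>auto simp: minimal_zero_forcing_set_def minimal_fort_def\<close>)
    hence "v \<in> T'" using T' by blast
    with T' zi show False unfolding Z_irrelevant_def by blast
  qed
next
  assume nf: "\<not> (\<exists>F. minimal_fort V E F \<and> v \<in> F)"
  show "Z_irrelevant V E v"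
    unfolding Z_irrelevant_def
  proof
    assume "\<exists>B. minimal_zero_forcing_set V E B \<and> v \<in> B"
    then obtain B where B: "minimal_zero_forcing_set V E B" "v \<in> B" by blast
    have "\<not> zero_forcing_set V E (B - {v})" using B unfolding minimal_zero_forcing_set_def by blast
    moreover have "B \<subseteq> V" using B unfolding minimal_zero_forcing_set_def zero_forcing_set_def by blast
    ultimately have "\<not> (\<forall>F. fort V E F \<longrightarrow> F \<inter> (B - {v}) \<noteq> {})"
      using zfs_iff[OF assms(1), of "B - {v}"] by blast
    then obtain F where F: "fort V E F" "F \<inter> (B - {v}) = {}" by blast
    obtain F' where F': "F' \<subseteq> F" "minimal_fort V E F'" using fort_has_minimal[OF assms(1) F(1)] by blast
    have "F' \<inter> B \<noteq> {}"
      by (rule zfs_hits_fort) (use F' B in \<open>auto simp: minimal_zero_forcing_set_def minimal_fort_def\<close>)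
    hence "v \<in> F'" using F F' by blast
    with F' nf show False by blast
  qed
qed

end
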